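(* Let $\beta>0$ and $\beta'>0$. For integers $k,l\geqslant 0$ define $$T_{l,k}=\int_{\mathbb{R}}H_{l}^{\beta'}(v)\,\mathcal{H}_{k}^{\beta}(v)\,\mathrm{d}v,$$ and set $T_{l,k}=0$ whenever $l<0$ or $k<0$. Then: (i) $T_{l,k}=0$ whenever $l<k$ or $l+k$ is odd; (ii) for all $k,l\geqslant 0$, $T_{l,k}=\frac{\beta}{\beta'}\sqrt{\frac{k+1}{l+1}}\,T_{l+1,k+1}$ and $T_{l,l}=\left(\frac{\beta'}{\beta}\right)^{l+\frac12}$; (iii) for all $l\geqslant 1$, $k\geqslant 0$, $$T_{l,k}=\frac{\beta'}{\beta}\sqrt{\frac{k+1}{l}}\,T_{l-1,k+1}+\frac{\beta'}{\beta}\sqrt{\frac{k}{l}}\,T_{l-1,k-1}-\sqrt{\frac{l-1}{l}}\,T_{l-2,k};$$ (iv) for all $l\geqslant 1$, $k\geqslant 0$ with $l\neq k$, $$T_{l,k}=\frac{\sqrt{l(k+1)}}{l-k}\left(\frac{\beta'}{\beta}-\frac{\beta}{\beta'}\right)T_{l-1,k+1}.$$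
   Context: $H_k$ denotes the (physicists') Hermite polynomial of degree $k\geqslant 0$, given by Rodrigues' formula $H_k(v)=(-1)^k e^{v^2}\frac{\mathrm{d}^k}{\mathrm{d}v^k}\big[e^{-v^2}\big]$. For a scaling factor $\beta>0$ and $k\geqslant 0$, the scaled Hermite polynomial and the scaled asymmetrically-weighted Hermite function are $$H_k^{\beta}(v)=\frac{\sqrt{\beta}}{(2\pi)^{1/4}\sqrt{2^k k!}}\,H_k\!\left(\frac{\beta v}{\sqrt2}\right),\qquad \mathcal{H}_k^{\beta}(v)=\frac{\sqrt{\beta}}{(2\pi)^{1/4}\sqrt{2^k k!}}\,H_k\!\left(\frac{\beta v}{\sqrt2}\right)e^{-\frac{\beta^2v^2}{2}},\qquad v\in\mathbb{R}.$$ *)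

theory Defs
  imports "HOL-Analysis.Analysis"
begin

definition hermite :: "nat \<Rightarrow> real \<Rightarrow> real" where
  "hermite k v = (-1) ^ k * exp (v\<^sup>2) * (deriv ^^ k) (\<lambda>x. exp (- (x\<^sup>2))) v"

definition hermite_norm :: "real \<Rightarrow> nat \<Rightarrow> real" where
  "hermite_norm \<beta> k = sqrt \<beta> / ((2 * pi) powr (1/4) * sqrt (2 ^ k * fact k))"

definition scaled_hermite :: "real \<Rightarrow> nat \<Rightarrow> real \<Rightarrow> real" where
  "scaled_hermite \<beta> k v = hermite_norm \<beta> k * hermite k (\<beta> * v / sqrt 2)"

definition scaled_hermite_fun :: "real \<Rightarrow> nat \<Rightarrow> real \<Rightarrow> real" where
  "scaled_hermite_fun \<beta> k v =
     hermite_norm \<beta> k * hermite k (\<beta> * v / sqrt 2) * exp (- (\<beta>\<^sup>2 * v\<^sup>2 / 2))"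

definition Tcoef :: "real \<Rightarrow> real \<Rightarrow> int \<Rightarrow> int \<Rightarrow> real" where
  "Tcoef \<beta> \<beta>' l k = (if l < 0 \<or> k < 0 then 0 else
     (\<integral>v. scaled_hermite \<beta>' (nat l) v * scaled_hermite_fun \<beta> (nat k) v \<partial>lborel))"

end

theory Submission
  imports Defs "HOL-Probability.Distributions" "HOL-Computational_Algebra.Polynomial" "HOL-Real_Asymp.Real_Asymp"
begin

fun hp :: "nat \<Rightarrow> real poly" where
  "hp 0 = 1"
| "hp (Suc 0) = [:0, 2:]"
| "hp (Suc (Suc n)) = [:0, 2:] * hp (Suc n) - smult (2 * (real n + 1)) (hp n)"

lemma hp_pderiv_aux: "pderiv (hp (Suc n)) = smult (2 * (real n + 1)) (hp n) \<and>
   pderiv (hp (Suc (Suc n))) = smult (2 * (real n + 2)) (hp (Suc n))"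
proof (induction n)
  case 0
  show ?case by (simp add: pderiv_pCons pderiv_mult algebra_simps)
next
  case (Suc n)
  have e: "pderiv (hp (Suc (Suc (Suc n)))) = smult 2 (hp (Suc (Suc n))) + [:0,2:] * pderiv (hp (Suc (Suc n)))
     - smult (2 * (real (Suc n) + 1)) (pderiv (hp (Suc n)))"
    by (simp only: hp.simps pderiv_diff pderiv_mult pderiv_smult) (simp add: pderiv_pCons)
  have "pderiv (hp (Suc (Suc (Suc n)))) = smult (2 * (real (Suc n) + 2)) (hp (Suc (Suc n)))"
    unfolding e using Suc.IH
    by (simp only: poly_eq_poly_eq_iff[symmetric] fun_eq_iff) (simp add: algebra_simps)
  then show ?case using Suc.IH by (simp add: ac_simps)
qed

lemma hp_pderiv: "pderiv (hp (Suc n)) = smult (2 * (real n + 1)) (hp n)"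
  using hp_pderiv_aux by blast

lemma hp_Suc: "hp (Suc n) = [:0, 2:] * hp n - pderiv (hp n)"
  by (cases n) (simp_all add: hp_pderiv)

lemma rodrigues: "(deriv ^^ k) (\<lambda>x. exp (- (x\<^sup>2))) = (\<lambda>x. (-1) ^ k * poly (hp k) x * exp (- (x\<^sup>2)))"
proof (induction k)
  case 0
  then show ?case by simp
next
  case (Suc k)
  have "deriv (\<lambda>x. (-1) ^ k * poly (hp k) x * exp (- (x\<^sup>2))) x = (-1) ^ Suc k * poly (hp (Suc k)) x * exp (- (x\<^sup>2))" for x
  proof (rule DERIV_imp_deriv)
    show "((\<lambda>x. (-1) ^ k * poly (hp k) x * exp (- (x\<^sup>2))) has_real_derivative (-1) ^ Suc k * poly (hp (Suc k)) x * exp (- (x\<^sup>2))) (at x)"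
      by (auto intro!: derivative_eq_intros poly_DERIV simp: hp_Suc algebra_simps)
  qed
  moreover have "(deriv ^^ Suc k) (\<lambda>x. exp (- (x\<^sup>2))) = deriv (\<lambda>x. (-1)^k * poly (hp k) x * exp (- (x\<^sup>2)))"
    by (simp only: funpow.simps o_apply Suc.IH)
  ultimately show ?case by (simp add: fun_eq_iff)
qed

lemma hermite_poly: "hermite k v = poly (hp k) v"
  unfolding hermite_def rodrigues
  by (simp add: mult.assoc mult.left_commute[of "exp _"] exp_minus field_simps)

lemma hp_parity: "poly (hp n) (-x) = (-1) ^ n * poly (hp n) x \<and> poly (hp (Suc n)) (-x) = (-1) ^ Suc n * poly (hp (Suc n)) x"
  by (induction n) (auto simp: algebra_simps)

lemma gauss_mono_integrable:
  fixes c :: real assumes c: "c > 0"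
  shows "integrable lborel (\<lambda>x. x ^ k * exp (- c * x\<^sup>2))"
proof -
  define \<sigma> where "\<sigma> = 1 / sqrt (2 * c)"
  have s: "\<sigma> > 0" using c by (simp add: \<sigma>_def)
  have s2: "2 * \<sigma>\<^sup>2 = 1 / c" using c by (simp add: \<sigma>_def power_divide)
  have "integrable lborel (\<lambda>x. sqrt (2 * pi * \<sigma>\<^sup>2) * (normal_density 0 \<sigma> x * (x - 0) ^ k))"
    using integrable_normal_moment[OF s, of 0 k] by simp
  also have "(\<lambda>x. sqrt (2 * pi * \<sigma>\<^sup>2) * (normal_density 0 \<sigma> x * (x - 0) ^ k)) = (\<lambda>x. x ^ k * exp (- c * x\<^sup>2))"
    using s c unfolding normal_density_def s2 by (auto simp: fun_eq_iff field_simps)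
  finally show ?thesis .
qed

lemma gauss_poly_integrable:
  fixes c :: real assumes c: "c > 0"
  shows "integrable lborel (\<lambda>x. poly p x * exp (- c * x\<^sup>2))"
proof -
  have "integrable lborel (\<lambda>x. \<Sum>i\<le>degree p. coeff p i * (x ^ i * exp (- c * x\<^sup>2)))"
    using gauss_mono_integrable[OF c] by (auto intro!: integrable_sum integrable_mult_right)
  then show ?thesis by (simp add: poly_altdef sum_distrib_right mult.assoc)
qed

lemma gauss_mono_lim:
  fixes c :: real and F assumes c: "c > 0" and F: "filterlim (\<lambda>x. c * x\<^sup>2) at_top F"
  shows "((\<lambda>x. x ^ k * exp (- c * x\<^sup>2)) \<longlongrightarrow> 0) F"
proof (rule Lim_null_comparison)
  have "((\<lambda>x. (c * x\<^sup>2) ^ k / exp (c * x\<^sup>2)) \<longlongrightarrow> 0) F"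
    using filterlim_compose[OF tendsto_power_div_exp_0 F] by simp
  then show "((\<lambda>x. (1 / c ^ k) * ((c * x\<^sup>2) ^ k / exp (c * x\<^sup>2))) \<longlongrightarrow> 0) F"
    using tendsto_mult_right_zero by blast
  have "eventually (\<lambda>x. c * x\<^sup>2 \<ge> c) F"
    using F by (simp add: filterlim_at_top)
  then show "eventually (\<lambda>x. norm (x ^ k * exp (- c * x\<^sup>2)) \<le> (1 / c ^ k) * ((c * x\<^sup>2) ^ k / exp (c * x\<^sup>2))) F"
  proof eventually_elim
    case (elim x)
    then have x1: "1 \<le> \<bar>x\<bar>" using c abs_square_less_1[of x] by simp
    have "\<bar>x\<bar> ^ k \<le> \<bar>x\<bar> ^ (2 * k)" using x1 by (intro power_increasing) auto
    also have "\<bar>x\<bar> ^ (2 * k) = (x\<^sup>2) ^ k" by (simp add: power_mult power2_abs)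
    finally have "\<bar>x\<bar> ^ k \<le> (x\<^sup>2) ^ k" .
    then show ?case using c
      by (simp add: abs_mult power_abs exp_minus power_mult_distrib field_simps)
  qed
qed

lemma gauss_poly_lim:
  fixes c :: real and F assumes c: "c > 0" and F: "filterlim (\<lambda>x. c * x\<^sup>2) at_top F"
  shows "((\<lambda>x. poly p x * exp (- c * x\<^sup>2)) \<longlongrightarrow> 0) F"
proof -
  have "((\<lambda>x. \<Sum>i\<le>degree p. coeff p i * (x ^ i * exp (- c * x\<^sup>2))) \<longlongrightarrow> 0) F"
    using gauss_mono_lim[OF c F] by (intro tendsto_null_sum tendsto_mult_right_zero) auto
  then show ?thesis by (simp add: poly_altdef sum_distrib_right mult.assoc)
qed

lemma sq_at_top: "c > 0 \<Longrightarrow> filterlim (\<lambda>x::real. c * x\<^sup>2) at_top at_top"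
  by real_asymp
lemma sq_at_bot: "c > 0 \<Longrightarrow> filterlim (\<lambda>x::real. c * x\<^sup>2) at_top at_bot"
  by real_asymp

lemma gauss_ftc:
  fixes c :: real assumes c: "c > 0"
    and D: "\<And>x. ((\<lambda>x. poly p x * exp (- c * x\<^sup>2)) has_real_derivative (poly q x * exp (- c * x\<^sup>2))) (at x)"
  shows "(\<integral>x. poly q x * exp (- c * x\<^sup>2) \<partial>lborel) = 0"
proof -
  let ?F = "\<lambda>x. poly p x * exp (- c * x\<^sup>2)"
  let ?f = "\<lambda>x. poly q x * exp (- c * x\<^sup>2)"
  have "(LBINT x=-\<infinity>..\<infinity>. ?f x) = 0 - 0"
  proof (rule interval_integral_FTC_integrable)
    show "- \<infinity> < (\<infinity>::ereal)" by simp
    show "(?F has_vector_derivative ?f x) (at x)" for x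
      using D[of x] by (simp add: has_real_derivative_iff_has_vector_derivative)
    show "isCont ?f x" for x by (intro continuous_intros)
    show "set_integrable lborel (einterval (- \<infinity>) \<infinity>) ?f"
      using gauss_poly_integrable[OF c] by (simp add: set_integrable_def)
    show "((?F \<circ> real_of_ereal) \<longlongrightarrow> 0) (at_right (- \<infinity>))"
      unfolding at_right_MInf tendsto_compose_filtermap
      using gauss_poly_lim[OF c sq_at_bot[OF c]] by (simp add: filtermap_filtermap)
    show "((?F \<circ> real_of_ereal) \<longlongrightarrow> 0) (at_left \<infinity>)"
      unfolding at_left_PInf tendsto_compose_filtermap
      using gauss_poly_lim[OF c sq_at_top[OF c]] by (simp add: filtermap_filtermap)
  qed
  then show ?thesis
    by (simp add: interval_lebesgue_integral_def set_lebesgue_integral_def)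
qed

definition hs :: "real \<Rightarrow> real" where "hs b = b / sqrt 2"

lemma hs2: "2 * hs b = sqrt 2 * b"
proof -
  have "2 * hs b = (sqrt 2 * sqrt 2) * b / sqrt 2" unfolding hs_def by simp
  also have "\<dots> = sqrt 2 * b" by (simp only: mult.assoc) (rule nonzero_mult_div_cancel_left, simp)
  finally show ?thesis .
qed

definition SP :: "real \<Rightarrow> nat \<Rightarrow> real poly" where
  "SP b k = smult (hermite_norm b k) (pcompose (hp k) [:0, hs b:])"

lemma poly_SP: "poly (SP b k) v = hermite_norm b k * poly (hp k) (hs b * v)"
  by (simp add: SP_def poly_pcompose ac_simps)

lemma hs_v: "b * v / sqrt 2 = hs b * v"
  unfolding hs_def by simp

lemma sh_SP: "scaled_hermite b k v = poly (SP b k) v"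
  unfolding scaled_hermite_def hermite_poly hs_v poly_SP ..

lemma shf_SP: "scaled_hermite_fun b k v = poly (SP b k) v * exp (- (b\<^sup>2 / 2) * v\<^sup>2)"
  unfolding scaled_hermite_fun_def hermite_poly hs_v poly_SP by simp

lemma N_Suc: "hermite_norm b k = hermite_norm b (Suc k) * (sqrt 2 * sqrt (real k + 1))"
proof -
  have "sqrt (2 ^ Suc k * fact (Suc k)) = sqrt (2 ^ k * fact k) * (sqrt 2 * sqrt (real k + 1))"
    by (simp add: real_sqrt_mult[symmetric] algebra_simps)
  moreover have "sqrt (2 ^ k * fact k) > 0" "sqrt 2 * sqrt (real k + 1) > 0" by auto
  ultimately show ?thesis unfolding hermite_norm_def by (simp add: field_simps)
qed

lemma F1: "((\<lambda>v. poly (SP b (Suc l)) v) has_real_derivative (b * sqrt (real l + 1) * poly (SP b l) v)) (at v)"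
proof -
  let ?P = "poly (hp l) (hs b * v)"
  let ?N = "hermite_norm b (Suc l)"
  have d: "((\<lambda>v. ?N * poly (hp (Suc l)) (hs b * v)) has_real_derivative
     ?N * (poly (pderiv (hp (Suc l))) (hs b * v) * hs b)) (at v)"
    by (auto intro!: derivative_eq_intros poly_DERIV[THEN DERIV_chain2])
  moreover have eq: "?N * (poly (pderiv (hp (Suc l))) (hs b * v) * hs b)
      = b * sqrt (real l + 1) * (hermite_norm b l * ?P)"
  proof -
    have q: "sqrt (real l + 1) * sqrt (real l + 1) = real l + 1" by simp
    have "?N * (poly (pderiv (hp (Suc l))) (hs b * v) * hs b) = ?N * (real l + 1) * ?P * (2 * hs b)"
      by (simp add: hp_pderiv algebra_simps)
    also have "\<dots> = ?N * (sqrt (real l + 1) * sqrt (real l + 1)) * ?P * (sqrt 2 * b)"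
      by (simp only: q hs2)
    also have "\<dots> = b * sqrt (real l + 1) * ((?N * (sqrt 2 * sqrt (real l + 1))) * ?P)"
      by (simp only: mult_ac)
    finally show ?thesis by (simp only: N_Suc[of b l, symmetric])
  qed
  have f: "poly (SP b (Suc l)) = (\<lambda>v. ?N * poly (hp (Suc l)) (hs b * v))"
    by (rule ext) (simp only: poly_SP)
  show ?thesis unfolding f poly_SP by (rule DERIV_cong[OF d eq])
qed

lemma b_hs: "b = sqrt 2 * hs b" unfolding hs_def by simp
lemma r2: "sqrt 2 * sqrt 2 = (2::real)" by simp

lemma alg2: fixes r a b N N1 s P Q E v :: real
  assumes h: "r * r = 2" and "b = r * a" "N = N1 * (r * s)"
  shows "N * (Q * a) * E + N * P * (E * (-(b\<^sup>2/2) * (2 * v))) = -(b * s) * (N1 * (2 * (a * v) * P - Q)) * E"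
proof -
  have "N * (Q * a) * E + N * P * (E * (-(b\<^sup>2/2) * (2 * v))) = N1 * r * s * Q * a * E - (r * r) * (N1 * r * s * P * E * a * a * v)"
    using assms(2,3) by (simp add: field_simps power2_eq_square)
  also have "\<dots> = -(b * s) * (N1 * (2 * (a * v) * P - Q)) * E"
    unfolding h using assms(2) by (simp add: algebra_simps)
  finally show ?thesis .
qed

lemma alg3: fixes r a b N0 N1 N2 s1 s2 P0 P1 v n :: real
  assumes h: "r * r = 2" and "b = r * a" "N1 = N2 * (r * s2)" "N0 = N1 * (r * s1)" "s1 * s1 = n + 1" "s2 \<noteq> 0"
  shows "N2 * (2 * (a * v) * P1 - 2 * (n + 1) * P0) = b * v / s2 * (N1 * P1) - s1 / s2 * (N0 * P0)"
proof -
  have "b * v / s2 * (N1 * P1) - s1 / s2 * (N0 * P0) = (r * r) * (a * v * N2 * P1) - (r * r) * ((s1 * s1) * N2 * P0)"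
    using assms(2-6) by (simp add: field_simps)
  also have "\<dots> = N2 * (2 * (a * v) * P1 - 2 * (n + 1) * P0)"
    unfolding h assms(5) by (simp add: algebra_simps)
  finally show ?thesis ..
qed

lemma alg4: fixes r a b N0 N1 N2 s1 s2 P0 P1 P2 v n :: real
  assumes h: "r * r = 2" and "b = r * a" "N1 = N2 * (r * s2)" "N0 = N1 * (r * s1)" "s1 * s1 = n + 1" "b \<noteq> 0"
    "P2 = 2 * (a * v) * P1 - 2 * (n + 1) * P0"
  shows "v * (N1 * P1) = 1 / b * (s2 * (N2 * P2) + s1 * (N0 * P0))"
proof -
  have "s2 * (N2 * P2) + s1 * (N0 * P0) = s2 * N2 * 2 * a * v * P1 - 2 * (n + 1) * s2 * N2 * P0 + (r * r) * ((s1 * s1) * N2 * s2 * P0)"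
    unfolding assms(7) assms(4) assms(3) by (simp add: algebra_simps)
  also have "\<dots> = s2 * N2 * 2 * a * v * P1"
    unfolding h assms(5) by (simp add: algebra_simps)
  also have "\<dots> = (r * r) * (s2 * N2 * a * v * P1)"
    unfolding h by (simp add: algebra_simps)
  finally have eq: "s2 * (N2 * P2) + s1 * (N0 * P0) = (r * r) * (s2 * N2 * a * v * P1)" .
  show ?thesis unfolding eq using assms(2,3,6) by (simp add: field_simps)
qed

lemma F2: "((\<lambda>v. poly (SP b k) v * exp (- (b\<^sup>2 / 2) * v\<^sup>2)) has_real_derivative
   (- (b * sqrt (real k + 1)) * poly (SP b (Suc k)) v * exp (- (b\<^sup>2 / 2) * v\<^sup>2))) (at v)"
proof -
  let ?x = "hs b * v"
  let ?E = "exp (- (b\<^sup>2 / 2) * v\<^sup>2)"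
  let ?N = "hermite_norm b k"
  have "((\<lambda>v. ?N * poly (hp k) (hs b * v) * exp (- (b\<^sup>2 / 2) * v\<^sup>2)) has_real_derivative
     ?N * (poly (pderiv (hp k)) ?x * hs b) * ?E + ?N * poly (hp k) ?x * (?E * (- (b\<^sup>2 / 2) * (2 * v)))) (at v)"
    by (auto intro!: derivative_eq_intros poly_DERIV[THEN DERIV_chain2])
  moreover have "?N * (poly (pderiv (hp k)) ?x * hs b) * ?E + ?N * poly (hp k) ?x * (?E * (- (b\<^sup>2 / 2) * (2 * v)))
     = - (b * sqrt (real k + 1)) * (hermite_norm b (Suc k) * (2 * (hs b * v) * poly (hp k) ?x - poly (pderiv (hp k)) ?x)) * ?E"
    by (rule alg2[OF r2 b_hs N_Suc])
  moreover have "poly (hp (Suc k)) ?x = 2 * (hs b * v) * poly (hp k) ?x - poly (pderiv (hp k)) ?x"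
    by (simp add: hp_Suc)
  ultimately show ?thesis by (simp add: poly_SP)
qed

lemma F3: "poly (SP b (Suc (Suc n))) v = b * v / sqrt (real n + 2) * poly (SP b (Suc n)) v
      - sqrt ((real n + 1) / (real n + 2)) * poly (SP b n) v"
proof -
  have N1: "hermite_norm b (Suc n) = hermite_norm b (Suc (Suc n)) * (sqrt 2 * sqrt (real n + 2))"
    using N_Suc[of b "Suc n"] by (simp add: add_ac)
  have "hermite_norm b (Suc (Suc n)) * (2 * (hs b * v) * poly (hp (Suc n)) (hs b * v) - 2 * (real n + 1) * poly (hp n) (hs b * v))
    = b * v / sqrt (real n + 2) * (hermite_norm b (Suc n) * poly (hp (Suc n)) (hs b * v))
      - sqrt (real n + 1) / sqrt (real n + 2) * (hermite_norm b n * poly (hp n) (hs b * v))"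
    by (rule alg3[OF r2 b_hs N1 N_Suc]) auto
  then show ?thesis by (simp add: poly_SP real_sqrt_divide mult_ac)
qed

lemma F3b: "poly (SP b (Suc 0)) v = b * v * poly (SP b 0) v"
proof -
  have "hermite_norm b 0 = hermite_norm b (Suc 0) * sqrt 2" using N_Suc[of b 0] by simp
  then show ?thesis using hs2[of b] by (simp add: poly_SP algebra_simps)
qed

lemma F4: assumes b: "b \<noteq> 0"
  shows "v * poly (SP b k) v = (1 / b) * (sqrt (real k + 1) * poly (SP b (Suc k)) v
      + sqrt (real k) * poly (SP b (k - 1)) v)"
proof (cases k)
  case 0
  have "hermite_norm b 0 = hermite_norm b (Suc 0) * sqrt 2" using N_Suc[of b 0] by simp
  then show ?thesis unfolding 0 using hs2[of b] b by (simp add: poly_SP field_simps)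
next
  case (Suc n)
  have N1: "hermite_norm b (Suc n) = hermite_norm b (Suc (Suc n)) * (sqrt 2 * sqrt (real n + 2))"
    using N_Suc[of b "Suc n"] by (simp add: add_ac)
  have "v * (hermite_norm b (Suc n) * poly (hp (Suc n)) (hs b * v)) = 1 / b * (sqrt (real n + 2) * (hermite_norm b (Suc (Suc n)) * poly (hp (Suc (Suc n))) (hs b * v))
     + sqrt (real n + 1) * (hermite_norm b n * poly (hp n) (hs b * v)))"
    by (rule alg4[OF r2 b_hs N1 N_Suc]) (use b in auto)
  then show ?thesis unfolding Suc by (simp add: poly_SP add_ac)
qed

definition Tn :: "real \<Rightarrow> real \<Rightarrow> nat \<Rightarrow> nat \<Rightarrow> real" where
  "Tn b b' l k = (\<integral>v. poly (SP b' l) v * (poly (SP b k) v * exp (- (b\<^sup>2 / 2) * v\<^sup>2)) \<partial>lborel)"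

lemma Tcoef_Tn: "Tcoef b b' (int l) (int k) = Tn b b' l k"
  by (simp add: Tcoef_def Tn_def sh_SP shf_SP)

lemma intg: assumes "b > 0"
  shows "integrable lborel (\<lambda>v. poly p v * (poly (SP b k) v * exp (- (b\<^sup>2 / 2) * v\<^sup>2)))"
proof -
  have "integrable lborel (\<lambda>v. poly (p * SP b k) v * exp (- (b\<^sup>2 / 2) * v\<^sup>2))"
    by (rule gauss_poly_integrable) (use assms in simp)
  then show ?thesis by (simp add: mult.assoc)
qed

lemma ibp: assumes b: "b > 0"
  shows "(\<integral>v. poly (pderiv p) v * (poly (SP b k) v * exp (- (b\<^sup>2 / 2) * v\<^sup>2)) \<partial>lborel)
     = b * sqrt (real k + 1) * (\<integral>v. poly p v * (poly (SP b (Suc k)) v * exp (- (b\<^sup>2 / 2) * v\<^sup>2)) \<partial>lborel)"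
proof -
  let ?E = "\<lambda>v. exp (- (b\<^sup>2 / 2) * v\<^sup>2)"
  let ?q = "pderiv p * SP b k - smult (b * sqrt (real k + 1)) (p * SP b (Suc k))"
  have c: "b\<^sup>2 / 2 > 0" using b by simp
  have D: "((\<lambda>v. poly (p * SP b k) v * ?E v) has_real_derivative poly ?q v * ?E v) (at v)" for v
  proof -
    note DERIV_mult'[OF poly_DERIV[of p v] F2[of b k v]]
    then show ?thesis by (simp add: algebra_simps)
  qed
  have "(\<integral>v. poly ?q v * ?E v \<partial>lborel) = 0"
    by (rule gauss_ftc[OF c D])
  moreover have "(\<integral>v. poly ?q v * ?E v \<partial>lborel) =
     (\<integral>v. poly (pderiv p) v * (poly (SP b k) v * ?E v) \<partial>lborel)
     - b * sqrt (real k + 1) * (\<integral>v. poly p v * (poly (SP b (Suc k)) v * ?E v) \<partial>lborel)"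
  proof -
    have "(\<integral>v. poly ?q v * ?E v \<partial>lborel) = (\<integral>v. poly (pderiv p) v * (poly (SP b k) v * ?E v)
        - b * sqrt (real k + 1) * (poly p v * (poly (SP b (Suc k)) v * ?E v)) \<partial>lborel)"
      by (rule Bochner_Integration.integral_cong) (auto simp: algebra_simps)
    also have "\<dots> = (\<integral>v. poly (pderiv p) v * (poly (SP b k) v * ?E v) \<partial>lborel)
     - (\<integral>v. b * sqrt (real k + 1) * (poly p v * (poly (SP b (Suc k)) v * ?E v)) \<partial>lborel)"
      by (rule Bochner_Integration.integral_diff[OF intg[OF b] integrable_mult_right[OF intg[OF b]]])
    finally show ?thesis by simp
  qed
  ultimately show ?thesis by simp
qed

lemma pderiv_SP: "poly (pderiv (SP b (Suc l))) v = b * sqrt (real l + 1) * poly (SP b l) v"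
  using DERIV_unique[OF poly_DERIV F1] .

lemma pderiv_SP0: "pderiv (SP b 0) = 0"
  by (simp add: SP_def one_pCons pcompose_const pderiv_smult)

lemma T_shift: assumes "b > 0"
  shows "b' * sqrt (real l + 1) * Tn b b' l k = b * sqrt (real k + 1) * Tn b b' (Suc l) (Suc k)"
proof -
  have "b' * sqrt (real l + 1) * Tn b b' l k = (\<integral>v. poly (pderiv (SP b' (Suc l))) v * (poly (SP b k) v * exp (- (b\<^sup>2 / 2) * v\<^sup>2)) \<partial>lborel)"
    unfolding Tn_def pderiv_SP by (simp add: mult.assoc)
  also have "\<dots> = b * sqrt (real k + 1) * Tn b b' (Suc l) (Suc k)"
    unfolding ibp[OF assms] Tn_def ..
  finally show ?thesis .
qed

lemma T0: assumes "b > 0" shows "Tn b b' 0 (Suc m) = 0"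
proof -
  have "0 = b * sqrt (real m + 1) * Tn b b' 0 (Suc m)"
    using ibp[OF assms, of "SP b' 0" m] unfolding pderiv_SP0 Tn_def by simp
  then show ?thesis using assms by simp
qed

lemma SP_neg: "poly (SP b k) (- v) = (-1) ^ k * poly (SP b k) v"
  using hp_parity[of k "hs b * v"] by (simp add: poly_SP)

lemma T_odd: assumes "odd (l + k)" shows "Tn b b' l k = 0"
proof -
  let ?f = "\<lambda>v. poly (SP b' l) v * (poly (SP b k) v * exp (- (b\<^sup>2 / 2) * v\<^sup>2))"
  have "Tn b b' l k = \<bar>-1\<bar> *\<^sub>R (\<integral>v. ?f (0 + (-1) * v) \<partial>lborel)"
    unfolding Tn_def by (rule lborel_integral_real_affine) simp
  also have "(\<lambda>v. ?f (0 + (-1) * v)) = (\<lambda>v. - ?f v)"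
  proof
    fix v
    have sg: "(-1::real) ^ l * (-1) ^ k = -1" using assms by (simp add: power_add[symmetric])
    have e1: "poly (SP b' l) (0 + (-1) * v) = (-1) ^ l * poly (SP b' l) v" using SP_neg by simp
    have e2: "poly (SP b k) (0 + (-1) * v) = (-1) ^ k * poly (SP b k) v" using SP_neg by simp
    have e3: "(0 + (-1) * v)\<^sup>2 = v\<^sup>2" by simp
    have "?f (0 + (-1) * v) = (-1) ^ l * poly (SP b' l) v * ((-1) ^ k * poly (SP b k) v * exp (- (b\<^sup>2 / 2) * v\<^sup>2))"
      unfolding e1 e2 e3 ..
    also have "\<dots> = ((-1::real) ^ l * (-1) ^ k) * ?f v" by (simp only: mult_ac)
    also have "\<dots> = - ?f v" unfolding sg by simp
    finally show "?f (0 + (-1) * v) = - ?f v" .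
  qed
  finally have "Tn b b' l k = - Tn b b' l k" by (simp add: Tn_def)
  then show ?thesis by simp
qed

lemma F3u: "poly (SP b (Suc m)) v = b * v / sqrt (real m + 1) * poly (SP b m) v
   - sqrt (real m / (real m + 1)) * poly (SP b (m - 1)) v"
proof (cases m)
  case 0
  then show ?thesis using F3b[of b v] by simp
next
  case (Suc n)
  then show ?thesis using F3[of b n v] by (simp add: add_ac)
qed

lemma T_rec: assumes b: "b > 0"
  shows "Tn b b' (Suc m) k = b' / b * sqrt ((real k + 1) / (real m + 1)) * Tn b b' m (Suc k)
     + b' / b * sqrt (real k / (real m + 1)) * Tn b b' m (k - 1)
     - sqrt (real m / (real m + 1)) * Tn b b' (m - 1) k"
proof -
  let ?E = "\<lambda>v. exp (- (b\<^sup>2 / 2) * v\<^sup>2)"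
  have bne: "b \<noteq> 0" using b by simp
  let ?f1 = "\<lambda>v. poly (SP b' m) v * (poly (SP b (Suc k)) v * ?E v)"
  let ?f2 = "\<lambda>v. poly (SP b' m) v * (poly (SP b (k - 1)) v * ?E v)"
  let ?f3 = "\<lambda>v. poly (SP b' (m - 1)) v * (poly (SP b k) v * ?E v)"
  let ?c1 = "b' / b * sqrt ((real k + 1) / (real m + 1))"
  let ?c2 = "b' / b * sqrt (real k / (real m + 1))"
  let ?c3 = "sqrt (real m / (real m + 1))"
  have pw: "poly (SP b' (Suc m)) v * (poly (SP b k) v * ?E v) = ?c1 * ?f1 v + ?c2 * ?f2 v - ?c3 * ?f3 v" for v
  proof -
    have "poly (SP b' (Suc m)) v * (poly (SP b k) v * ?E v)
      = b' / sqrt (real m + 1) * poly (SP b' m) v * ((v * poly (SP b k) v) * ?E v) - ?c3 * ?f3 v"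
      unfolding F3u by (simp add: algebra_simps)
    also have "\<dots> = b' / sqrt (real m + 1) * poly (SP b' m) v * ((1 / b) * (sqrt (real k + 1) * poly (SP b (Suc k)) v
      + sqrt (real k) * poly (SP b (k - 1)) v) * ?E v) - ?c3 * ?f3 v"
      unfolding F4[OF bne, of v k] by simp
    also have "\<dots> = ?c1 * ?f1 v + ?c2 * ?f2 v - ?c3 * ?f3 v"
      by (simp add: real_sqrt_divide algebra_simps)
    finally show ?thesis .
  qed
  have "Tn b b' (Suc m) k = (\<integral>v. ?c1 * ?f1 v + ?c2 * ?f2 v - ?c3 * ?f3 v \<partial>lborel)"
    unfolding Tn_def pw ..
  also have "\<dots> = (\<integral>v. ?c1 * ?f1 v + ?c2 * ?f2 v \<partial>lborel) - (\<integral>v. ?c3 * ?f3 v \<partial>lborel)"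
    by (intro Bochner_Integration.integral_diff Bochner_Integration.integrable_add integrable_mult_right intg b)
  also have "(\<integral>v. ?c1 * ?f1 v + ?c2 * ?f2 v \<partial>lborel) = (\<integral>v. ?c1 * ?f1 v \<partial>lborel) + (\<integral>v. ?c2 * ?f2 v \<partial>lborel)"
    by (intro Bochner_Integration.integral_add integrable_mult_right intg b)
  finally show ?thesis by (simp add: Tn_def)
qed

lemma gauss_total: assumes b: "b > 0"
  shows "(\<integral>v. exp (- (b\<^sup>2 / 2) * v\<^sup>2) \<partial>lborel) = sqrt (2 * pi) / b"
proof -
  let ?X = "(\<integral>v. exp (- (b\<^sup>2 / 2) * v\<^sup>2) \<partial>lborel)"
  have s: "(1 / b) > 0" using b by simp
  have i1: "(\<integral>v. normal_density 0 (1 / b) v \<partial>lborel) = 1" by (rule integral_normal_density[OF s])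
  have fe: "(\<lambda>v. normal_density 0 (1 / b) v) = (\<lambda>v. b / sqrt (2 * pi) * exp (- (b\<^sup>2 / 2) * v\<^sup>2))"
    using b by (auto simp: fun_eq_iff normal_density_def real_sqrt_divide power_divide field_simps)
  have "1 = (\<integral>v. b / sqrt (2 * pi) * exp (- (b\<^sup>2 / 2) * v\<^sup>2) \<partial>lborel)"
    using i1 unfolding fe by (rule sym)
  also have "\<dots> = b / sqrt (2 * pi) * ?X" by (rule integral_mult_right_zero)
  finally have h: "1 = b / sqrt (2 * pi) * ?X" .
  have p: "sqrt (2 * pi) > 0" by simp
  have "sqrt (2 * pi) = sqrt (2 * pi) * (b / sqrt (2 * pi) * ?X)" using h by (metis mult.right_neutral)
  also have "\<dots> = b * ?X" using p by simp
  finally have "sqrt (2 * pi) = b * ?X" .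
  then show ?thesis using b by (simp add: eq_divide_eq mult.commute)
qed

lemma T00: assumes b: "b > 0" and b': "b' > 0"
  shows "Tn b b' 0 0 = sqrt (b' / b)"
proof -
  let ?q = "(2 * pi) powr (1/4) :: real"
  have p: "sqrt (2 * pi) > 0" by simp
  have "?q * ?q = (2 * pi) powr (1/4 + 1/4)" by (rule powr_add[symmetric])
  also have "\<dots> = (2 * pi) powr (1/2)" by (rule arg_cong[where f="\<lambda>x. (2 * pi) powr x"]) simp
  also have "\<dots> = sqrt (2 * pi)" by (rule powr_half_sqrt) simp
  finally have qq: "?q * ?q = sqrt (2 * pi)" .
  have "Tn b b' 0 0 = hermite_norm b' 0 * hermite_norm b 0 * (\<integral>v. exp (- (b\<^sup>2 / 2) * v\<^sup>2) \<partial>lborel)"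
    unfolding Tn_def by (simp add: poly_SP mult.assoc)
  also have "\<dots> = sqrt b' * sqrt b / (?q * ?q) * (sqrt (2 * pi) / b)"
    unfolding gauss_total[OF b] hermite_norm_def by simp
  also have "\<dots> = sqrt b' * sqrt b / b"
    unfolding qq using p by simp
  also have "\<dots> = sqrt b' / sqrt b"
    using b by (simp add: field_simps)
  also have "\<dots> = sqrt (b' / b)" by (simp add: real_sqrt_divide)
  finally show ?thesis .
qed

lemma T_diag: assumes b: "b > 0" and b': "b' > 0"
  shows "Tn b b' l l = (b' / b) powr (real l + 1/2)"
proof (induction l)
  case 0
  then show ?case using T00[OF b b'] b b' by (simp add: powr_half_sqrt)
next
  case (Suc l)
  have "b' * sqrt (real l + 1) * Tn b b' l l = b * sqrt (real l + 1) * Tn b b' (Suc l) (Suc l)"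
    by (rule T_shift[OF b])
  then have "Tn b b' (Suc l) (Suc l) = b' / b * Tn b b' l l" using b by (simp add: field_simps)
  also have "\<dots> = (b' / b) powr 1 * (b' / b) powr (real l + 1/2)" using Suc b b' by simp
  also have "\<dots> = (b' / b) powr (1 + (real l + 1/2))" by (simp only: powr_add)
  also have "\<dots> = (b' / b) powr (real (Suc l) + 1/2)" by (simp add: add_ac)
  finally show ?case .
qed

lemma T_lower: assumes b: "b > 0" and b': "b' > 0"
  shows "l < k \<Longrightarrow> Tn b b' l k = 0"
proof (induction l arbitrary: k)
  case 0
  then obtain m where "k = Suc m" by (cases k) auto
  then show ?case using T0[OF b] by simp
next
  case (Suc l)
  then obtain m where k: "k = Suc m" and lm: "l < m" by (cases k) auto
  have "b' * sqrt (real l + 1) * Tn b b' l m = b * sqrt (real m + 1) * Tn b b' (Suc l) (Suc m)"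
    by (rule T_shift[OF b])
  then show ?case using Suc.IH[OF lm] k b by simp
qed

lemma fin_alg: fixes N M T A x y s t :: real
  assumes N: "N > 0" and s: "s > 0" and ss: "s * s = N"
    and h: "T = x * (t / s) * A + M / N * T - y * (t / s) * A"
  shows "T * (N - M) = s * t * (x - y) * A"
proof -
  have h1: "T - M / N * T = x * (t / s) * A - y * (t / s) * A" using h by linarith
  have "T * (N - M) = N * (T - M / N * T)" using N by (simp add: field_simps)
  also have "\<dots> = N * (x * (t / s) * A - y * (t / s) * A)" by (simp only: h1)
  also have "\<dots> = (s * s) * (t / s) * (x - y) * A" unfolding ss using s by (simp add: field_simps)
  also have "\<dots> = s * t * (x - y) * A" using s by (simp add: field_simps)
  finally show ?thesis .
qed

lemma T_iv: assumes b: "b > 0" and b': "b' > 0" and nm: "Suc n \<noteq> m"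
  shows "Tn b b' (Suc n) m = sqrt ((real n + 1) * (real m + 1)) / (real n + 1 - real m) * (b' / b - b / b') * Tn b b' n (Suc m)"
proof -
  let ?T = "Tn b b' (Suc n) m" and ?A = "Tn b b' n (Suc m)"
  define s where "s = sqrt (real n + 1)"
  define t where "t = sqrt (real m + 1)"
  have s0: "s > 0" and ss: "s * s = real n + 1" and t0: "t > 0" unfolding s_def t_def by auto
  have eqB: "b' / b * sqrt (real m / (real n + 1)) * Tn b b' n (m - 1) = real m / (real n + 1) * ?T"
  proof (cases m)
    case 0 then show ?thesis by simp
  next
    case (Suc j)
    have "b' * sqrt (real n + 1) * Tn b b' n j = b * sqrt (real j + 1) * Tn b b' (Suc n) (Suc j)"
      by (rule T_shift[OF b])
    then have hB: "b' * Tn b b' n j = b * sqrt (real m) * ?T / s" using Suc s0 unfolding s_def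
      by (simp add: field_simps add_ac)
    have rmrm: "sqrt (real m) * sqrt (real m) = real m" by simp
    have "b' / b * sqrt (real m / (real n + 1)) * Tn b b' n (m - 1) = b' / b * (sqrt (real m) / s) * Tn b b' n j"
      using Suc by (simp add: real_sqrt_divide s_def)
    also have "\<dots> = sqrt (real m) / (b * s) * (b' * Tn b b' n j)" using b s0 by (simp add: field_simps)
    also have "\<dots> = sqrt (real m) / (b * s) * (b * sqrt (real m) * ?T / s)" by (simp only: hB)
    also have "\<dots> = (sqrt (real m) * sqrt (real m)) / (s * s) * ?T" using b s0 by (simp add: field_simps)
    also have "\<dots> = real m / (real n + 1) * ?T" by (simp only: rmrm ss)
    finally show ?thesis .
  qed
  have eqC: "sqrt (real n / (real n + 1)) * Tn b b' (n - 1) m = b / b' * (t / s) * ?A"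
  proof (cases n)
    case 0 then show ?thesis using T0[OF b, of b' m] by simp
  next
    case (Suc j)
    have "b' * sqrt (real j + 1) * Tn b b' j m = b * sqrt (real m + 1) * Tn b b' (Suc j) (Suc m)"
      by (rule T_shift[OF b])
    then have hC: "b' * sqrt (real n) * Tn b b' j m = b * t * ?A" using Suc unfolding t_def
      by (simp add: add_ac)
    have rn: "sqrt (real n) > 0" using Suc by simp
    have "sqrt (real n / (real n + 1)) * Tn b b' (n - 1) m = sqrt (real n) / s * Tn b b' j m"
      using Suc by (simp add: real_sqrt_divide s_def)
    also have "\<dots> = 1 / (b' * s) * (b' * sqrt (real n) * Tn b b' j m)" using b' s0 by (simp add: field_simps)
    also have "\<dots> = 1 / (b' * s) * (b * t * ?A)" by (simp only: hC)
    also have "\<dots> = b / b' * (t / s) * ?A" using b' s0 by (simp add: field_simps)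
    finally show ?thesis .
  qed
  have hT: "?T = b' / b * (t / s) * ?A + real m / (real n + 1) * ?T - b / b' * (t / s) * ?A"
    using T_rec[OF b, of b' n m] eqB eqC by (simp add: real_sqrt_divide s_def t_def)
  have "?T * (real n + 1 - real m) = s * t * (b' / b - b / b') * ?A"
    by (rule fin_alg[OF _ s0 ss hT]) simp
  moreover have "real n + 1 - real m \<noteq> 0" using nm by simp
  moreover have "s * t = sqrt ((real n + 1) * (real m + 1))" unfolding s_def t_def by (simp add: real_sqrt_mult)
  ultimately show ?thesis by (simp add: field_simps)
qed

lemma Tc: "0 \<le> l \<Longrightarrow> 0 \<le> k \<Longrightarrow> Tcoef b b' l k = Tn b b' (nat l) (nat k)"
  by (metis Tcoef_Tn int_nat_eq)

lemma Tneg: "l < 0 \<or> k < 0 \<Longrightarrow> Tcoef b b' l k = 0"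
  by (simp add: Tcoef_def)

theorem proposition3p1:
  fixes \<beta> \<beta>' :: real
  assumes "\<beta> > 0" and "\<beta>' > 0"
  shows "(\<forall>l k::int. 0 \<le> l \<and> 0 \<le> k \<and> (l < k \<or> odd (l + k)) \<longrightarrow> Tcoef \<beta> \<beta>' l k = 0)
    \<and> (\<forall>l k::int. 0 \<le> l \<and> 0 \<le> k \<longrightarrow>
         Tcoef \<beta> \<beta>' l k = \<beta> / \<beta>' * sqrt ((k + 1) / (l + 1)) * Tcoef \<beta> \<beta>' (l + 1) (k + 1))
    \<and> (\<forall>l::int. 0 \<le> l \<longrightarrow> Tcoef \<beta> \<beta>' l l = (\<beta>' / \<beta>) powr (l + 1/2))
    \<and> (\<forall>l k::int. 1 \<le> l \<and> 0 \<le> k \<longrightarrow>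
         Tcoef \<beta> \<beta>' l k = \<beta>' / \<beta> * sqrt ((k + 1) / l) * Tcoef \<beta> \<beta>' (l - 1) (k + 1)
           + \<beta>' / \<beta> * sqrt (k / l) * Tcoef \<beta> \<beta>' (l - 1) (k - 1)
           - sqrt ((l - 1) / l) * Tcoef \<beta> \<beta>' (l - 2) k)
    \<and> (\<forall>l k::int. 1 \<le> l \<and> 0 \<le> k \<and> l \<noteq> k \<longrightarrow>
         Tcoef \<beta> \<beta>' l k = sqrt (l * (k + 1)) / (l - k) * (\<beta>' / \<beta> - \<beta> / \<beta>')
           * Tcoef \<beta> \<beta>' (l - 1) (k + 1))"
proof (intro conjI allI impI)
  note b = assms(1) and b' = assms(2)
  fix l k :: int
  assume h: "0 \<le> l \<and> 0 \<le> k \<and> (l < k \<or> odd (l + k))"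
  then obtain n m where l: "l = int n" and k: "k = int m" by (metis nonneg_int_cases)
  have "n < m \<or> odd (n + m)" using h unfolding l k by (auto simp flip: of_nat_add)
  then show "Tcoef \<beta> \<beta>' l k = 0"
    unfolding l k Tcoef_Tn using T_lower[OF b b'] T_odd by blast
next
  note b = assms(1) and b' = assms(2)
  fix l k :: int
  assume h: "0 \<le> l \<and> 0 \<le> k"
  then obtain n m where l: "l = int n" and k: "k = int m" by (metis nonneg_int_cases)
  have e: "Tcoef \<beta> \<beta>' (l + 1) (k + 1) = Tn \<beta> \<beta>' (Suc n) (Suc m)"
    unfolding l k using Tcoef_Tn[of \<beta> \<beta>' "Suc n" "Suc m"] by (simp add: ac_simps)
  have "\<beta>' * sqrt (real n + 1) * Tn \<beta> \<beta>' n m = \<beta> * sqrt (real m + 1) * Tn \<beta> \<beta>' (Suc n) (Suc m)"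
    by (rule T_shift[OF b])
  then have "Tn \<beta> \<beta>' n m = \<beta> / \<beta>' * sqrt ((real m + 1) / (real n + 1)) * Tn \<beta> \<beta>' (Suc n) (Suc m)"
    using b b' by (simp add: real_sqrt_divide field_simps)
  then show "Tcoef \<beta> \<beta>' l k = \<beta> / \<beta>' * sqrt (real_of_int (k + 1) / (real_of_int l + 1)) * Tcoef \<beta> \<beta>' (l + 1) (k + 1)"
    unfolding e unfolding l k Tcoef_Tn by simp
next
  note b = assms(1) and b' = assms(2)
  fix l :: int
  assume "0 \<le> l"
  then obtain n where l: "l = int n" by (metis nonneg_int_cases)
  show "Tcoef \<beta> \<beta>' l l = (\<beta>' / \<beta>) powr (real_of_int l + 1 / 2)"
    unfolding l Tcoef_Tn T_diag[OF b b'] by simp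
next
  note b = assms(1) and b' = assms(2)
  fix l k :: int
  assume h: "1 \<le> l \<and> 0 \<le> k"
  define n where "n = nat l - 1"
  define m where "m = nat k"
  have l: "l = int (Suc n)" using h unfolding n_def by simp
  have k: "k = int m" using h unfolding m_def by simp
  have e1: "Tcoef \<beta> \<beta>' (l - 1) (k + 1) = Tn \<beta> \<beta>' n (Suc m)"
    unfolding l k using Tcoef_Tn[of \<beta> \<beta>' n "Suc m"] by (simp add: ac_simps)
  have e2: "sqrt (real_of_int k / real_of_int l) * Tcoef \<beta> \<beta>' (l - 1) (k - 1) = sqrt (real m / (real n + 1)) * Tn \<beta> \<beta>' n (m - 1)"
  proof (cases m)
    case 0 then show ?thesis unfolding l k by simp
  next
    case (Suc j) then show ?thesis unfolding l k using Tcoef_Tn[of \<beta> \<beta>' n j] by (simp add: add_ac)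
  qed
  have e3: "sqrt ((real_of_int l - 1) / real_of_int l) * Tcoef \<beta> \<beta>' (l - 2) k = sqrt (real n / (real n + 1)) * Tn \<beta> \<beta>' (n - 1) m"
  proof (cases n)
    case 0 then show ?thesis unfolding l k by simp
  next
    case (Suc j)
    have "int (Suc (Suc j)) - 2 = int j" by simp
    then show ?thesis unfolding l k using Suc Tcoef_Tn[of \<beta> \<beta>' j m] by (simp add: add_ac)
  qed
  have e0: "Tcoef \<beta> \<beta>' l k = Tn \<beta> \<beta>' (Suc n) m" unfolding l k Tcoef_Tn ..
  have e4: "real_of_int (k + 1) / real_of_int l = (real m + 1) / (real n + 1)" unfolding l k by simp
  show "Tcoef \<beta> \<beta>' l k = \<beta>' / \<beta> * sqrt (real_of_int (k + 1) / real_of_int l) * Tcoef \<beta> \<beta>' (l - 1) (k + 1)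
           + \<beta>' / \<beta> * sqrt (real_of_int k / real_of_int l) * Tcoef \<beta> \<beta>' (l - 1) (k - 1)
           - sqrt ((real_of_int l - 1) / real_of_int l) * Tcoef \<beta> \<beta>' (l - 2) k"
    unfolding e0 e1 e3 e4 mult.assoc[of "\<beta>' / \<beta>" "sqrt (real_of_int k / real_of_int l)"] e2
    using T_rec[OF b, of \<beta>' n m] by (simp add: mult.assoc)
next
  note b = assms(1) and b' = assms(2)
  fix l k :: int
  assume h: "1 \<le> l \<and> 0 \<le> k \<and> l \<noteq> k"
  define n where "n = nat l - 1"
  define m where "m = nat k"
  have l: "l = int (Suc n)" using h unfolding n_def by simp
  have k: "k = int m" using h unfolding m_def by simp
  have nm: "Suc n \<noteq> m" using h l k by auto
  have e1: "Tcoef \<beta> \<beta>' (l - 1) (k + 1) = Tn \<beta> \<beta>' n (Suc m)"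
    unfolding l k using Tcoef_Tn[of \<beta> \<beta>' n "Suc m"] by (simp add: ac_simps)
  have e0: "Tcoef \<beta> \<beta>' l k = Tn \<beta> \<beta>' (Suc n) m" unfolding l k Tcoef_Tn ..
  have e2: "sqrt (real_of_int (l * (k + 1))) / real_of_int (l - k) = sqrt ((real n + 1) * (real m + 1)) / (real n + 1 - real m)"
    unfolding l k by (simp add: add.commute)
  show "Tcoef \<beta> \<beta>' l k = sqrt (real_of_int (l * (k + 1))) / real_of_int (l - k) * (\<beta>' / \<beta> - \<beta> / \<beta>') * Tcoef \<beta> \<beta>' (l - 1) (k + 1)"
    unfolding e0 e1 e2 by (rule T_iv[OF b b' nm])
qed

end
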